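(* Let $\Omega_\star$ be a discrete filtered set centred at $\omega\in\mathbb{C}$ and let $H$ be an $\Omega_\star$-homotopy. Then there exist a good open covering $(I_i)_{0\le i\le n}$ of $[0,1]$ and positive real numbers $L_0,\dots,L_n$ such that for every $i=0,\dots,n$ and every $t\in I_i$, $H_t\in\mathfrak{R}_{\Omega_\star}(L_i)$, and for every $i=0,\dots,n-1$ and every $t\in I_i\cap I_{i+1}$, $H_t\in\mathfrak{R}_{\Omega_\star}(L_i)\cap\mathfrak{R}_{\Omega_\star}(L_{i+1})$.
   Context: A discrete filtered set centred at $\omega$ is a family $\Omega_\star=(\Omega_L)_{L>0}$ of finite subsets of $\mathbb{C}$ with $\Omega_L\subset D(\omega,L)$, $\Omega_{L_1}\subseteq\Omega_{L_2}$ for $L_1\le L_2$, and $\Omega_L=\{\omega\}$ for small $L>0$. For a path $\lambda:[a,a+l]\to\mathbb{C}$, $\underline\lambda(t)=\lambda(a+tl)$ is its standardization; $\mathcal{L}_\lambda$ is the length. $\mathfrak{R}_{\Omega_\star}(L)$ is the set of piecewise $\mathcal{C}^1$ paths $\lambda$ starting at $\omega$ with $\mathcal{L}_\lambda<L$ which are either constant or such that for some $t_0\in[0,1)$, $\underline\lambda([0,t_0])=\{\omega\}$ and $\underline\lambda((t_0,1])\subset D(\omega,L)\setminus\Omega_L$. A path is $\Omega_\star$-allowed if it is in $\mathfrak{R}_{\Omega_\star}(L)$ for some $L>0$. An $\Omega_\star$-homotopy is a continuous map $H:[0,1]^2\to\mathbb{C}$, $(s,t)\mapsto H_t(s)$,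 having a continuous partial derivative $\partial H/\partial s$, such that each path $H_t$ is $\Omega_\star$-allowed. A good open covering of $[0,1]$ is a finite covering by relatively open connected intervals with no triple intersections. *)

theory Defs
  imports "HOL-Complex_Analysis.Complex_Analysis"
begin

definition discrete_filtered_set :: "(real \<Rightarrow> complex set) \<Rightarrow> complex \<Rightarrow> bool" where
  "discrete_filtered_set Om w \<longleftrightarrow>
     (\<forall>L>0. finite (Om L) \<and> Om L \<subseteq> ball w L) \<and>
     (\<forall>L1 L2. 0 < L1 \<and> L1 \<le> L2 \<longrightarrow> Om L1 \<subseteq> Om L2) \<and>
     (\<exists>d>0. \<forall>L. 0 < L \<and> L \<le> d \<longrightarrow> Om L = {w})"

text \<open>Paths are represented by their standardization, i.e. as maps on [0,1].
  Length of a piecewise C1 path.\<close>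
definition path_len :: "(real \<Rightarrow> complex) \<Rightarrow> real" where
  "path_len g = integral {0..1} (\<lambda>t. norm (vector_derivative g (at t)))"

definition R_set :: "(real \<Rightarrow> complex set) \<Rightarrow> complex \<Rightarrow> real \<Rightarrow> (real \<Rightarrow> complex) \<Rightarrow> bool" where
  "R_set Om w L g \<longleftrightarrow>
     valid_path g \<and> pathstart g = w \<and> path_len g < L \<and>
     ((\<forall>t\<in>{0..1}. g t = g 0) \<or>
      (\<exists>t0. 0 \<le> t0 \<and> t0 < 1 \<and> g ` {0..t0} = {w} \<and> g ` {t0<..1} \<subseteq> ball w L - Om L))"

definition allowed :: "(real \<Rightarrow> complex set) \<Rightarrow> complex \<Rightarrow> (real \<Rightarrow> complex) \<Rightarrow> bool" where
  "allowed Om w g \<longleftrightarrow> (\<exists>L>0. R_set Om w L g)"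

definition Omega_homotopy :: "(real \<Rightarrow> complex set) \<Rightarrow> complex \<Rightarrow> (real \<Rightarrow> real \<Rightarrow> complex) \<Rightarrow> bool" where
  "Omega_homotopy Om w H \<longleftrightarrow>
     continuous_on ({0..1} \<times> {0..1}) (\<lambda>(s,t). H t s) \<and>
     (\<exists>D. continuous_on ({0..1} \<times> {0..1}) (\<lambda>(s,t). D t s) \<and>
          (\<forall>s\<in>{0..1}. \<forall>t\<in>{0..1}. ((\<lambda>s'. H t s') has_vector_derivative D t s) (at s within {0..1}))) \<and>
     (\<forall>t\<in>{0..1}. allowed Om w (H t))"

definition good_open_covering :: "nat \<Rightarrow> (nat \<Rightarrow> real set) \<Rightarrow> bool" where
  "good_open_covering n I \<longleftrightarrow>
     (\<forall>i\<le>n. I i \<noteq> {} \<and> openin (top_of_set {0..1}) (I i) \<and> connected (I i)) \<and>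
     (\<Union>i\<le>n. I i) = {0..1} \<and>
     (\<forall>i j k. i \<le> n \<and> j \<le> n \<and> k \<le> n \<and> i \<noteq> j \<and> j \<noteq> k \<and> i \<noteq> k \<longrightarrow> I i \<inter> I j \<inter> I k = {})"

end

theory Submission
  imports Defs
begin

lemma w_in_Om:
  assumes "discrete_filtered_set Om w" "L > 0"
  shows "w \<in> Om L"
proof -
  from assms(1) obtain d where d: "d > 0" "\<forall>L. 0 < L \<and> L \<le> d \<longrightarrow> Om L = {w}"
    and mono: "\<forall>L1 L2. 0 < L1 \<and> L1 \<le> L2 \<longrightarrow> Om L1 \<subseteq> Om L2"
    unfolding discrete_filtered_set_def by blast
  have "Om (min d L) = {w}" using d assms(2) by simp
  moreover have "Om (min d L) \<subseteq> Om L"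
    using mono[rule_format, of "min d L" L] d assms(2) by simp
  ultimately show ?thesis by auto
qed

lemma path_len_eq:
  assumes "\<forall>s\<in>{0..1}. ((\<lambda>s'. g s') has_vector_derivative D s) (at s within {0..1})"
  shows "path_len g = integral {0..1} (\<lambda>s. norm (D s))"
  unfolding path_len_def
proof (rule integral_spike[of "{0,1}"])
  show "negligible {0::real,1}" by simp
  fix s assume s: "s \<in> {0..1} - {0::real,1}"
  then have "0 < s" "s < 1" by auto
  then have "at s within {0..1} = at s" by (simp add: at_within_Icc_at)
  then have "(g has_vector_derivative D s) (at s)" using assms s by force
  then show "norm (D s) = norm (vector_derivative g (at s))"
    by (simp add: vector_derivative_at)
qed

lemma cont_slice:
  assumes "continuous_on ({0..1}\<times>{0..1}) (\<lambda>(s,t). F t s)" "t \<in> {0..1::real}"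
  shows "continuous_on {0..1} (\<lambda>s. F t s)"
proof -
  have "continuous_on {0..1} (\<lambda>s. (\<lambda>(s,t). F t s) (s, t))"
    by (rule continuous_on_compose2[OF assms(1)]) (use assms(2) in \<open>auto intro!: continuous_intros\<close>)
  then show ?thesis by simp
qed

lemma dist_slice: "dist ((s::real), (t'::real)) (s, t) = dist t' t"
  by (simp add: dist_Pair_Pair)

lemma open_R:
  assumes df: "discrete_filtered_set Om w" and hom: "Omega_homotopy Om w H"
   and L: "L > 0" and t: "t \<in> {0..1}" and R: "R_set Om w L (H t)"
  shows "\<exists>e>0. \<forall>t'\<in>{0..1}. dist t' t < e \<longrightarrow> R_set Om w L (H t')"
proof -
  obtain D where contH: "continuous_on ({0..1}\<times>{0..1}) (\<lambda>(s,t). H t s)"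
    and contD: "continuous_on ({0..1}\<times>{0..1}) (\<lambda>(s,t). D t s)"
    and der: "\<forall>s\<in>{0..1}. \<forall>t\<in>{0..1}. ((\<lambda>s'. H t s') has_vector_derivative D t s) (at s within {0..1})"
    and allw: "\<forall>t\<in>{0..1}. allowed Om w (H t)"
    using hom unfolding Omega_homotopy_def by blast
  have plen: "path_len (H t) = integral {0..1} (\<lambda>s. norm (D t s))" if "t \<in> {0..1}" for t
    using path_len_eq[of "H t" "D t"] der that by blast
  define \<eta> where "\<eta> = (L - path_len (H t))/2"
  have \<eta>: "\<eta> > 0" using R unfolding R_set_def \<eta>_def by auto
  have ucD: "uniformly_continuous_on ({0..1}\<times>{0..1}) (\<lambda>(s,t). D t s)"
    by (rule compact_uniformly_continuous[OF contD]) (simp add: compact_Times)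
  obtain e1 where e1: "e1>0" "\<forall>x\<in>{0..1}\<times>{0..1}. \<forall>x'\<in>{0..1}\<times>{0..1}. dist x' x < e1 \<longrightarrow> dist ((\<lambda>(s,t). D t s) x') ((\<lambda>(s,t). D t s) x) < \<eta>"
    using ucD \<eta> unfolding uniformly_continuous_on_def by metis
  have ucH: "uniformly_continuous_on ({0..1}\<times>{0..1}) (\<lambda>(s,t). H t s)"
    by (rule compact_uniformly_continuous[OF contH]) (simp add: compact_Times)
  define K where "K = H t ` {0..1}"
  define C where "C = - ball w L \<union> (Om L - {w})"
  have cK: "compact K" unfolding K_def
    by (rule compact_continuous_image[OF cont_slice[OF contH t]]) simp
  have fin: "finite (Om L)" using df L unfolding discrete_filtered_set_def by blast
  have cC: "closed C" unfolding C_def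
    by (intro closed_Un closed_Compl open_ball finite_imp_closed) (use fin in auto)
  have Ht0: "H t 0 = w" using R unfolding R_set_def pathstart_def by auto
  have KC: "K \<inter> C = {}"
  proof -
    { fix s :: real assume s: "s \<in> {0..1}"
      have "H t s \<notin> C"
        using R unfolding R_set_def
      proof (elim conjE disjE exE)
        assume "\<forall>x\<in>{0..1}. H t x = H t 0"
        then show ?thesis using s Ht0 L unfolding C_def by auto
      next
        fix t0 assume a: "0 \<le> t0" "t0 < 1" "H t ` {0..t0} = {w}" "H t ` {t0<..1} \<subseteq> ball w L - Om L"
        show ?thesis
        proof (cases "s \<le> t0")
          case True then have "H t s = w" using a s by auto
          then show ?thesis using L unfolding C_def by auto
        next
          case False then have "s \<in> {t0<..1}" using s by auto
          then have "H t s \<in> ball w L - Om L" using a(4) by blast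
          then show ?thesis unfolding C_def by auto
        qed
      qed }
    then show ?thesis unfolding K_def by auto
  qed
  obtain \<delta> where \<delta>: "\<delta> > 0" "\<forall>x\<in>K. \<forall>y\<in>C. \<delta> \<le> dist x y"
    using separate_compact_closed[OF cK cC KC] by blast
  obtain e2 where e2: "e2>0" "\<forall>x\<in>{0..1}\<times>{0..1}. \<forall>x'\<in>{0..1}\<times>{0..1}. dist x' x < e2 \<longrightarrow> dist ((\<lambda>(s,t). H t s) x') ((\<lambda>(s,t). H t s) x) < \<delta>"
    using ucH \<delta>(1) unfolding uniformly_continuous_on_def by metis
  show ?thesis
  proof (intro exI[of _ "min e1 e2"] conjI ballI impI)
    show "0 < min e1 e2" using e1 e2 by simp
    fix t' assume t': "t' \<in> {0..1}" and dt: "dist t' t < min e1 e2"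
    have near: "H t' s \<notin> C" if s: "s \<in> {0..1}" for s
    proof
      assume "H t' s \<in> C"
      moreover have "H t s \<in> K" using s unfolding K_def by auto
      ultimately have "\<delta> \<le> dist (H t s) (H t' s)" using \<delta> by blast
      moreover have "dist (H t' s) (H t s) < \<delta>"
        using e2(2)[rule_format, of "(s,t)" "(s,t')"] s t t' dt by (simp add: dist_slice)
      ultimately show False by (simp add: dist_commute)
    qed
    have Dnear: "norm (D t' s) \<le> norm (D t s) + \<eta>" if s: "s \<in> {0..1}" for s
    proof -
      have "dist (D t' s) (D t s) < \<eta>"
        using e1(2)[rule_format, of "(s,t)" "(s,t')"] s t t' dt by (simp add: dist_slice)
      then show ?thesis using norm_triangle_ineq2[of "D t' s" "D t s"] by (simp add: dist_norm)
    qed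
    have i1: "(\<lambda>s. norm (D t' s)) integrable_on {0..1}"
      by (intro integrable_continuous_real continuous_intros cont_slice[OF contD t'])
    have i2: "(\<lambda>s. norm (D t s) + \<eta>) integrable_on {0..1}"
      by (intro integrable_continuous_real continuous_intros cont_slice[OF contD t])
    have "path_len (H t') \<le> integral {0..1} (\<lambda>s. norm (D t s) + \<eta>)"
      unfolding plen[OF t'] by (rule integral_le[OF i1 i2]) (use Dnear in auto)
    also have "\<dots> = path_len (H t) + \<eta>"
      using integral_add[of "\<lambda>s. norm (D t s)" "{0..1}" "\<lambda>_. \<eta>"]
        integrable_continuous_real[OF continuous_on_norm[OF cont_slice[OF contD t]]]
      by (simp add: plen[OF t] integrable_const_ivl)
    finally have "path_len (H t') \<le> path_len (H t) + \<eta>" .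
    moreover have "path_len (H t) < L" using R unfolding R_set_def by blast
    ultimately have len: "path_len (H t') < L" unfolding \<eta>_def by (simp add: field_simps)
    obtain L' where L': "L' > 0" "R_set Om w L' (H t')" using allw t' unfolding allowed_def by blast
    have wL': "w \<in> Om L'" using w_in_Om[OF df L'(1)] .
    show "R_set Om w L (H t')"
      using L'(2) unfolding R_set_def
    proof (elim conjE disjE exE)
      assume "valid_path (H t')" "pathstart (H t') = w" "\<forall>s\<in>{0..1}. H t' s = H t' 0"
      then show "valid_path (H t') \<and> pathstart (H t') = w \<and> path_len (H t') < L \<and>
        ((\<forall>s\<in>{0..1}. H t' s = H t' 0) \<or>
         (\<exists>t0. 0 \<le> t0 \<and> t0 < 1 \<and> H t' ` {0..t0} = {w} \<and> H t' ` {t0<..1} \<subseteq> ball w L - Om L))"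
        using len by blast
    next
      fix t0 assume a: "valid_path (H t')" "pathstart (H t') = w" "0 \<le> t0" "t0 < 1"
        "H t' ` {0..t0} = {w}" "H t' ` {t0<..1} \<subseteq> ball w L' - Om L'"
      have "H t' ` {t0<..1} \<subseteq> ball w L - Om L"
      proof
        fix z assume "z \<in> H t' ` {t0<..1}"
        then obtain s where s: "s \<in> {t0<..1}" "z = H t' s" by auto
        have "z \<notin> Om L'" using a(6) s by blast
        then have "z \<noteq> w" using wL' by auto
        moreover have "s \<in> {0..1}" using s a(3) by auto
        ultimately show "z \<in> ball w L - Om L" using near s unfolding C_def by auto
      qed
      then show "valid_path (H t') \<and> pathstart (H t') = w \<and> path_len (H t') < L \<and>
        ((\<forall>s\<in>{0..1}. H t' s = H t' 0) \<or>
         (\<exists>t0. 0 \<le> t0 \<and> t0 < 1 \<and> H t' ` {0..t0} = {w} \<and> H t' ` {t0<..1} \<subseteq> ball w L - Om L))"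
        using a len by blast
    qed
  qed
qed

lemma memI:
  assumes "N > (0::real)"
  shows "((i - 1)/N < x \<and> x < (i + 1)/N) \<longleftrightarrow> (i - 1 < x * N \<and> x * N < i + 1)"
  using assms by (simp add: field_simps)

lemma memI_dist:
  assumes "N > (0::real)" "i - 1 < x * N" "x * N < i + 1"
  shows "dist x (i / N) < 1 / N"
proof -
  have "\<bar>x * N - i\<bar> < 1" using assms by auto
  moreover have "dist x (i / N) = \<bar>x * N - i\<bar> / N"
    using assms(1) by (simp add: dist_real_def field_simps abs_div_pos[symmetric])
  ultimately show ?thesis using assms(1) by (simp add: divide_strict_right_mono)
qed

theorem lemma2p8:
  fixes Om :: "real \<Rightarrow> complex set" and w :: complex and H :: "real \<Rightarrow> real \<Rightarrow> complex"
  assumes "discrete_filtered_set Om w"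
    and "Omega_homotopy Om w H"
  shows "\<exists>n I L. good_open_covering n I \<and> (\<forall>i\<le>n. L i > (0::real)) \<and>
           (\<forall>i\<le>n. \<forall>t\<in>I i. R_set Om w (L i) (H t)) \<and>
           (\<forall>i<n. \<forall>t\<in>I i \<inter> I (Suc i). R_set Om w (L i) (H t) \<and> R_set Om w (L (Suc i)) (H t))"
proof -
  define \<G> where "\<G> = {ball c e |c e. \<exists>L>0. e > 0 \<and> c \<in> {0..1} \<and>
                        (\<forall>t'\<in>{0..1}. dist t' c < e \<longrightarrow> R_set Om w L (H t'))}"
  have cover: "{0..1} \<subseteq> \<Union>\<G>"
  proof
    fix t :: real assume t: "t \<in> {0..1}"
    have "\<forall>t\<in>{0..1}. allowed Om w (H t)" using assms(2) unfolding Omega_homotopy_def by blast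
    then obtain L where L: "L > 0" "R_set Om w L (H t)" using t unfolding allowed_def by blast
    obtain e where e: "e > 0" "\<forall>t'\<in>{0..1}. dist t' t < e \<longrightarrow> R_set Om w L (H t')"
      using open_R[OF assms L(1) t L(2)] by blast
    have "ball t e \<in> \<G>" unfolding \<G>_def using L(1) e t by blast
    moreover have "t \<in> ball t e" using e(1) by simp
    ultimately show "t \<in> \<Union>\<G>" by blast
  qed
  have opn: "\<And>G. G \<in> \<G> \<Longrightarrow> open G" unfolding \<G>_def by auto
  obtain \<epsilon> where eps: "0 < \<epsilon>" "\<And>x. x \<in> {0..1::real} \<Longrightarrow> \<exists>G \<in> \<G>. ball x \<epsilon> \<subseteq> G"
    using Heine_Borel_lemma[OF compact_Icc cover opn] by blast
  obtain N :: nat where N: "1 / \<epsilon> < real N" using reals_Archimedean2 by blast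
  have Npos: "real N > 0" using N eps(1) by (smt (verit) divide_pos_pos)
  have Neps: "1 / real N < \<epsilon>" using N eps(1) Npos by (simp add: field_simps)
  define I where "I i = {0..1} \<inter> {(real i - 1)/real N <..< (real i + 1)/real N}" for i :: nat
  have memI': "x \<in> I i \<longleftrightarrow> x \<in> {0..1} \<and> real i - 1 < x * real N \<and> x * real N < real i + 1" for x i
    unfolding I_def using memI[OF Npos, of "real i" x] by auto
  have centre: "real i / real N \<in> I i" if "i \<le> N" for i
    unfolding memI' using that Npos by (auto simp: field_simps)
  have exL: "\<exists>L>0. \<forall>t\<in>I i. R_set Om w L (H t)" if i: "i \<le> N" for i
  proof -
    have "real i / real N \<in> {0..1}" using centre[OF i] unfolding I_def by blast
    then obtain G where G: "G \<in> \<G>" "ball (real i / real N) \<epsilon> \<subseteq> G" using eps(2) by blast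
    then obtain c e L where ceL: "G = ball c e" "L > 0" "c \<in> {0..1}"
      "\<forall>t'\<in>{0..1}. dist t' c < e \<longrightarrow> R_set Om w L (H t')"
      unfolding \<G>_def by blast
    have "R_set Om w L (H t)" if t: "t \<in> I i" for t
    proof -
      have t01: "t \<in> {0..1}" using t unfolding I_def by blast
      have "dist t (real i / real N) < 1 / real N"
        using t memI_dist[OF Npos, of "real i" t] unfolding memI' by blast
      then have "t \<in> ball (real i / real N) \<epsilon>" using Neps by (simp add: dist_commute)
      then have "dist t c < e" using G(2) ceL(1) by (auto simp: dist_commute)
      then show ?thesis using ceL(4) t01 by blast
    qed
    then show ?thesis using ceL(2) by blast
  qed
  then have "\<forall>i. \<exists>L. i \<le> N \<longrightarrow> L > 0 \<and> (\<forall>t\<in>I i. R_set Om w L (H t))" by blast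
  from choice[OF this] obtain Lf where Lf0: "\<forall>i. i \<le> N \<longrightarrow> Lf i > 0 \<and> (\<forall>t\<in>I i. R_set Om w (Lf i) (H t))"
    by blast
  then have Lf: "\<And>i. i \<le> N \<Longrightarrow> Lf i > 0 \<and> (\<forall>t\<in>I i. R_set Om w (Lf i) (H t))" by blast
  have goc: "good_open_covering N I"
    unfolding good_open_covering_def
  proof (intro conjI allI impI)
    fix i assume i: "i \<le> N"
    show "I i \<noteq> {}" using centre[OF i] by blast
    show "openin (top_of_set {0..1}) (I i)" unfolding I_def
      by (intro openin_open_Int open_greaterThanLessThan)
    show "connected (I i)" unfolding I_def
      by (intro convex_connected convex_Int convex_real_interval)
  next
    show "(\<Union>i\<le>N. I i) = {0..1}"
    proof
      show "(\<Union>i\<le>N. I i) \<subseteq> {0..1}" unfolding I_def by blast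
      show "{0..1} \<subseteq> (\<Union>i\<le>N. I i)"
      proof
        fix x :: real assume x: "x \<in> {0..1}"
        define i where "i = nat \<lfloor>x * real N\<rfloor>"
        have xn: "0 \<le> x * real N" "x * real N \<le> real N" using x Npos by auto
        have "real i = of_int \<lfloor>x * real N\<rfloor>" unfolding i_def using xn by simp
        then have fl: "real i \<le> x * real N" "x * real N < real i + 1"
          by linarith+
        have "i \<le> N" using fl xn by linarith
        moreover have "x \<in> I i" unfolding memI' using x fl by auto
        ultimately show "x \<in> (\<Union>i\<le>N. I i)" by blast
      qed
    qed
  next
    fix i j k assume "i \<le> N \<and> j \<le> N \<and> k \<le> N \<and> i \<noteq> j \<and> j \<noteq> k \<and> i \<noteq> k"
    then have d: "i \<noteq> j" "j \<noteq> k" "i \<noteq> k" by auto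
    show "I i \<inter> I j \<inter> I k = {}"
    proof (rule ccontr)
      assume "I i \<inter> I j \<inter> I k \<noteq> {}"
      then obtain x where "x \<in> I i" "x \<in> I j" "x \<in> I k" by blast
      then have b: "real i - 1 < x * real N" "x * real N < real i + 1"
        "real j - 1 < x * real N" "x * real N < real j + 1"
        "real k - 1 < x * real N" "x * real N < real k + 1" unfolding memI' by auto
      have "real i < real j + 2" "real j < real i + 2" "real i < real k + 2"
        "real k < real i + 2" "real j < real k + 2" "real k < real j + 2" using b by linarith+
      then have "i < j + 2" "j < i + 2" "i < k + 2" "k < i + 2" "j < k + 2" "k < j + 2" by linarith+
      then show False using d by linarith
    qed
  qed
  have c2: "\<forall>i\<le>N. Lf i > 0" using Lf by blast
  have c3: "\<forall>i\<le>N. \<forall>t\<in>I i. R_set Om w (Lf i) (H t)" using Lf by blast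
  have c4: "\<forall>i<N. \<forall>t\<in>I i \<inter> I (Suc i). R_set Om w (Lf i) (H t) \<and> R_set Om w (Lf (Suc i)) (H t)"
  proof (intro allI impI ballI conjI)
    fix i t assume "i < N" "t \<in> I i \<inter> I (Suc i)"
    then show "R_set Om w (Lf i) (H t)" "R_set Om w (Lf (Suc i)) (H t)"
      using c3 by (meson IntD1 IntD2 Suc_leI less_imp_le)+
  qed
  show ?thesis using goc c2 c3 c4 by blast
qed

end
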